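(* Let $(T,\mu,\eta)$ be a monad on a category $\mathcal C$, $(T',\mu',\eta')$ a monad on a category $\mathcal C'$, and $(G\colon\mathcal C\to\mathcal C',V\colon\mathcal C'\to\mathcal C)$ an adjunction with unit $h\colon 1_{\mathcal C}\to VG$ and counit $e\colon GV\to 1_{\mathcal C'}$. Let $\zeta\colon T'G\to GT$ be a natural transformation with $\zeta\mu'_G=G(\mu)\zeta_TT'(\zeta)$ and $\zeta\eta'_G=G(\eta)$. Then the following are equivalent: (i) there is a natural transformation $\xi\colon TV\to VT'$ such that $\xi\mu_V=V(\mu')\xi_{T'}T(\xi)$, $\xi\eta_V=V(\eta')$, $T'(e)=e_{T'}G(\xi)\zeta_V$ and $h_T=V(\zeta)\xi_GT(h)$; (ii) $\zeta$ is invertible. In that case $\xi$ is unique and equals $VT'(e)\,V(\zeta^{-1}_V)\,h_{TV}$.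
   Context: Such a pair $(\zeta,\xi)$ corresponds to a lift of the adjunction $(G,V)$ to an adjunction between the categories of modules $\mathcal C^T$ and $\mathcal C'^{T'}$; $\zeta$ alone corresponds to a lift of $G$, via $(M,r)\mapsto(GM,G(r)\zeta_M)$. *)

theory Defs
  imports Main
begin

text \<open>A minimal, explicit rendering of (small) categories, functors, natural
transformations, monads and adjunctions.  Composition is written in
applicative order: Cmp C g f is "g after f".\<close>

record ('o, 'm) cat =
  Ob  :: "'o set"
  Ar  :: "'m set"
  Dm  :: "'m \<Rightarrow> 'o"
  Cd  :: "'m \<Rightarrow> 'o"
  Idn :: "'o \<Rightarrow> 'm"
  Cmp :: "'m \<Rightarrow> 'm \<Rightarrow> 'm"

definition category :: "('o, 'm) cat \<Rightarrow> bool" where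
  "category C \<longleftrightarrow>
     (\<forall>f\<in>Ar C. Dm C f \<in> Ob C \<and> Cd C f \<in> Ob C) \<and>
     (\<forall>X\<in>Ob C. Idn C X \<in> Ar C \<and> Dm C (Idn C X) = X \<and> Cd C (Idn C X) = X) \<and>
     (\<forall>f\<in>Ar C. \<forall>g\<in>Ar C. Cd C f = Dm C g \<longrightarrow>
        Cmp C g f \<in> Ar C \<and> Dm C (Cmp C g f) = Dm C f \<and> Cd C (Cmp C g f) = Cd C g) \<and>
     (\<forall>f\<in>Ar C. Cmp C (Idn C (Cd C f)) f = f \<and> Cmp C f (Idn C (Dm C f)) = f) \<and>
     (\<forall>f\<in>Ar C. \<forall>g\<in>Ar C. \<forall>k\<in>Ar C. Cd C f = Dm C g \<longrightarrow> Cd C g = Dm C k \<longrightarrow>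
        Cmp C k (Cmp C g f) = Cmp C (Cmp C k g) f)"

record ('o1, 'm1, 'o2, 'm2) ftor =
  omap :: "'o1 \<Rightarrow> 'o2"
  amap :: "'m1 \<Rightarrow> 'm2"

definition is_functor :: "('o1, 'm1) cat \<Rightarrow> ('o2, 'm2) cat \<Rightarrow> ('o1, 'm1, 'o2, 'm2) ftor \<Rightarrow> bool" where
  "is_functor C D F \<longleftrightarrow>
     (\<forall>X\<in>Ob C. omap F X \<in> Ob D) \<and>
     (\<forall>f\<in>Ar C. amap F f \<in> Ar D \<and> Dm D (amap F f) = omap F (Dm C f)
                               \<and> Cd D (amap F f) = omap F (Cd C f)) \<and>
     (\<forall>X\<in>Ob C. amap F (Idn C X) = Idn D (omap F X)) \<and>
     (\<forall>f\<in>Ar C. \<forall>g\<in>Ar C. Cd C f = Dm C g \<longrightarrow>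
        amap F (Cmp C g f) = Cmp D (amap F g) (amap F f))"

definition fcompose :: "('o2, 'm2, 'o3, 'm3) ftor \<Rightarrow> ('o1, 'm1, 'o2, 'm2) ftor \<Rightarrow> ('o1, 'm1, 'o3, 'm3) ftor" where
  "fcompose G F = \<lparr>omap = omap G \<circ> omap F, amap = amap G \<circ> amap F\<rparr>"

definition fid :: "('o, 'm, 'o, 'm) ftor" where
  "fid = \<lparr>omap = id, amap = id\<rparr>"

definition is_nat :: "('o1, 'm1) cat \<Rightarrow> ('o2, 'm2) cat \<Rightarrow> ('o1, 'm1, 'o2, 'm2) ftor
                       \<Rightarrow> ('o1, 'm1, 'o2, 'm2) ftor \<Rightarrow> ('o1 \<Rightarrow> 'm2) \<Rightarrow> bool" where
  "is_nat C D F G \<alpha> \<longleftrightarrow>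
     is_functor C D F \<and> is_functor C D G \<and>
     (\<forall>X\<in>Ob C. \<alpha> X \<in> Ar D \<and> Dm D (\<alpha> X) = omap F X \<and> Cd D (\<alpha> X) = omap G X) \<and>
     (\<forall>f\<in>Ar C. Cmp D (\<alpha> (Cd C f)) (amap F f) = Cmp D (amap G f) (\<alpha> (Dm C f)))"

definition is_monad :: "('o, 'm) cat \<Rightarrow> ('o, 'm, 'o, 'm) ftor \<Rightarrow> ('o \<Rightarrow> 'm) \<Rightarrow> ('o \<Rightarrow> 'm) \<Rightarrow> bool" where
  "is_monad C T \<mu> \<eta> \<longleftrightarrow>
     is_functor C C T \<and> is_nat C C (fcompose T T) T \<mu> \<and> is_nat C C fid T \<eta> \<and>
     (\<forall>X\<in>Ob C. Cmp C (\<mu> X) (amap T (\<mu> X)) = Cmp C (\<mu> X) (\<mu> (omap T X))) \<and>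
     (\<forall>X\<in>Ob C. Cmp C (\<mu> X) (\<eta> (omap T X)) = Idn C (omap T X)) \<and>
     (\<forall>X\<in>Ob C. Cmp C (\<mu> X) (amap T (\<eta> X)) = Idn C (omap T X))"

definition is_adjunction :: "('o1, 'm1) cat \<Rightarrow> ('o2, 'm2) cat \<Rightarrow> ('o1, 'm1, 'o2, 'm2) ftor
     \<Rightarrow> ('o2, 'm2, 'o1, 'm1) ftor \<Rightarrow> ('o1 \<Rightarrow> 'm1) \<Rightarrow> ('o2 \<Rightarrow> 'm2) \<Rightarrow> bool" where
  "is_adjunction C D G V h e \<longleftrightarrow>
     is_functor C D G \<and> is_functor D C V \<and>
     is_nat C C fid (fcompose V G) h \<and> is_nat D D (fcompose G V) fid e \<and>
     (\<forall>X\<in>Ob C. Cmp D (e (omap G X)) (amap G (h X)) = Idn D (omap G X)) \<and>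
     (\<forall>Y\<in>Ob D. Cmp C (amap V (e Y)) (h (omap V Y)) = Idn C (omap V Y))"

definition inverse_arr :: "('o, 'm) cat \<Rightarrow> 'm \<Rightarrow> 'm \<Rightarrow> bool" where
  "inverse_arr C f g \<longleftrightarrow> f \<in> Ar C \<and> g \<in> Ar C \<and> Dm C g = Cd C f \<and> Cd C g = Dm C f \<and>
     Cmp C g f = Idn C (Dm C f) \<and> Cmp C f g = Idn C (Cd C f)"

definition iso_arr :: "('o, 'm) cat \<Rightarrow> 'm \<Rightarrow> bool" where
  "iso_arr C f \<longleftrightarrow> (\<exists>g. inverse_arr C f g)"

definition inv_arr :: "('o, 'm) cat \<Rightarrow> 'm \<Rightarrow> 'm" where
  "inv_arr C f = (SOME g. inverse_arr C f g)"

definition xi_cond where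
  "xi_cond C C' T \<mu> \<eta> T' \<mu>' \<eta>' G V h e \<zeta> \<xi> \<longleftrightarrow>
     is_nat C' C (fcompose T V) (fcompose V T') \<xi> \<and>
     (\<forall>Y\<in>Ob C'. Cmp C (\<xi> Y) (\<mu> (omap V Y))
                 = Cmp C (amap V (\<mu>' Y)) (Cmp C (\<xi> (omap T' Y)) (amap T (\<xi> Y)))) \<and>
     (\<forall>Y\<in>Ob C'. Cmp C (\<xi> Y) (\<eta> (omap V Y)) = amap V (\<eta>' Y)) \<and>
     (\<forall>Y\<in>Ob C'. amap T' (e Y)
                 = Cmp C' (e (omap T' Y)) (Cmp C' (amap G (\<xi> Y)) (\<zeta> (omap V Y)))) \<and>
     (\<forall>X\<in>Ob C. h (omap T X)
                 = Cmp C (amap V (\<zeta> X)) (Cmp C (\<xi> (omap G X)) (amap T (h X))))"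

end

theory Submission imports Defs begin

lemma cat_dm: "category C \<Longrightarrow> f \<in> Ar C \<Longrightarrow> Dm C f \<in> Ob C" by (simp add: category_def)
lemma cat_cd: "category C \<Longrightarrow> f \<in> Ar C \<Longrightarrow> Cd C f \<in> Ob C" by (simp add: category_def)
lemma id_in: "category C \<Longrightarrow> X \<in> Ob C \<Longrightarrow> Idn C X \<in> Ar C" by (simp add: category_def)
lemma id_dm: "category C \<Longrightarrow> X \<in> Ob C \<Longrightarrow> Dm C (Idn C X) = X" by (simp add: category_def)
lemma id_cd: "category C \<Longrightarrow> X \<in> Ob C \<Longrightarrow> Cd C (Idn C X) = X" by (simp add: category_def)
lemma comp_in: "category C \<Longrightarrow> f \<in> Ar C \<Longrightarrow> g \<in> Ar C \<Longrightarrow> Cd C f = Dm C g \<Longrightarrow> Cmp C g f \<in> Ar C"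
  by (simp add: category_def)
lemma comp_dm: "category C \<Longrightarrow> f \<in> Ar C \<Longrightarrow> g \<in> Ar C \<Longrightarrow> Cd C f = Dm C g \<Longrightarrow> Dm C (Cmp C g f) = Dm C f"
  by (simp add: category_def)
lemma comp_cd: "category C \<Longrightarrow> f \<in> Ar C \<Longrightarrow> g \<in> Ar C \<Longrightarrow> Cd C f = Dm C g \<Longrightarrow> Cd C (Cmp C g f) = Cd C g"
  by (simp add: category_def)
lemma id_left: "category C \<Longrightarrow> f \<in> Ar C \<Longrightarrow> Cd C f = Y \<Longrightarrow> Cmp C (Idn C Y) f = f"
  by (auto simp add: category_def)
lemma id_right: "category C \<Longrightarrow> f \<in> Ar C \<Longrightarrow> Dm C f = Y \<Longrightarrow> Cmp C f (Idn C Y) = f"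
  by (auto simp add: category_def)
lemma assoc: "category C \<Longrightarrow> f \<in> Ar C \<Longrightarrow> g \<in> Ar C \<Longrightarrow> k \<in> Ar C \<Longrightarrow> Cd C f = Dm C g \<Longrightarrow> Cd C g = Dm C k \<Longrightarrow>
   Cmp C (Cmp C k g) f = Cmp C k (Cmp C g f)"
  by (simp add: category_def)
lemmas cat_simps = cat_dm cat_cd id_in id_dm id_cd comp_in comp_dm comp_cd id_left id_right assoc
lemma cont: "category C \<Longrightarrow> Cmp C a b = c \<Longrightarrow> k \<in> Ar C \<Longrightarrow> b \<in> Ar C \<Longrightarrow> a \<in> Ar C \<Longrightarrow> Cd C k = Dm C b \<Longrightarrow> Cd C b = Dm C a
   \<Longrightarrow> Cmp C a (Cmp C b k) = Cmp C c k"
  by (simp only: assoc[symmetric, of C k b a])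

lemma cont3:
  assumes c: "category C" and eq: "Cmp C a (Cmp C b c) = d" and t: "k \<in> Ar C" "c \<in> Ar C" "b \<in> Ar C" "a \<in> Ar C" "Cd C k = Dm C c" "Cd C c = Dm C b" "Cd C b = Dm C a"
  shows "Cmp C a (Cmp C b (Cmp C c k)) = Cmp C d k"
proof -
  have "Cmp C a (Cmp C b (Cmp C c k)) = Cmp C (Cmp C a (Cmp C b c)) k"
    using c t by (simp add: cat_simps)
  then show ?thesis using eq by simp
qed

lemma inv_unique: assumes c: "category C" and a: "inverse_arr C f g" "inverse_arr C f g'" shows "g = g'"
proof -
  have t: "f \<in> Ar C" "g \<in> Ar C" "g' \<in> Ar C" "Dm C g = Cd C f" "Cd C g = Dm C f" "Dm C g' = Cd C f" "Cd C g' = Dm C f"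
    and e1: "Cmp C g f = Idn C (Dm C f)" and e2: "Cmp C f g' = Idn C (Cd C f)"
    using a by (auto simp: inverse_arr_def)
  have "Cmp C (Cmp C g f) g' = Cmp C g (Cmp C f g')" using c t by (simp add: assoc)
  then have "Cmp C (Idn C (Dm C f)) g' = Cmp C g (Idn C (Cd C f))" by (simp only: e1 e2)
  then show ?thesis using c t by (simp add: id_left id_right)
qed

lemma inv_arr_eq: "category C \<Longrightarrow> inverse_arr C f g \<Longrightarrow> inv_arr C f = g"
  unfolding inv_arr_def by (rule some_equality) (auto intro: inv_unique)

lemma inv_arr_prop: "iso_arr C f \<Longrightarrow> inverse_arr C f (inv_arr C f)"
  unfolding inv_arr_def iso_arr_def by (rule someI_ex)

lemma fo_ob: "is_functor C D F \<Longrightarrow> X \<in> Ob C \<Longrightarrow> omap F X \<in> Ob D" by (simp add: is_functor_def)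
lemma fo_in: "is_functor C D F \<Longrightarrow> f \<in> Ar C \<Longrightarrow> amap F f \<in> Ar D" by (simp add: is_functor_def)
lemma fo_dm: "is_functor C D F \<Longrightarrow> f \<in> Ar C \<Longrightarrow> Dm D (amap F f) = omap F (Dm C f)" by (simp add: is_functor_def)
lemma fo_cd: "is_functor C D F \<Longrightarrow> f \<in> Ar C \<Longrightarrow> Cd D (amap F f) = omap F (Cd C f)" by (simp add: is_functor_def)
lemma fo_id: "is_functor C D F \<Longrightarrow> X \<in> Ob C \<Longrightarrow> amap F (Idn C X) = Idn D (omap F X)" by (simp add: is_functor_def)
lemma fo_comp: "is_functor C D F \<Longrightarrow> f \<in> Ar C \<Longrightarrow> g \<in> Ar C \<Longrightarrow> Cd C f = Dm C g \<Longrightarrow>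
   amap F (Cmp C g f) = Cmp D (amap F g) (amap F f)" by (simp add: is_functor_def)
lemma fo_map: "is_functor C D F \<Longrightarrow> Cmp C a b = c \<Longrightarrow> a \<in> Ar C \<Longrightarrow> b \<in> Ar C \<Longrightarrow> Cd C b = Dm C a \<Longrightarrow>
   Cmp D (amap F a) (amap F b) = amap F c"
  by (metis fo_comp)
lemmas fo_simps = fo_ob fo_in fo_dm fo_cd fo_id fo_comp

lemma fc_o[simp]: "omap (fcompose G F) X = omap G (omap F X)" by (simp add: fcompose_def)
lemma fc_a[simp]: "amap (fcompose G F) X = amap G (amap F X)" by (simp add: fcompose_def)
lemma fid_o[simp]: "omap fid X = X" by (simp add: fid_def)
lemma fid_a[simp]: "amap fid X = X" by (simp add: fid_def)

lemma fc_functor: "category C \<Longrightarrow> category D \<Longrightarrow> category E \<Longrightarrow> is_functor C D F \<Longrightarrow> is_functor D E G \<Longrightarrow> is_functor C E (fcompose G F)"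
  unfolding is_functor_def by (auto simp add: cat_simps)
lemma fid_functor: "category C \<Longrightarrow> is_functor C C fid" unfolding is_functor_def by (auto simp add: cat_simps)

lemma nt_in: "is_nat C D F G \<alpha> \<Longrightarrow> X \<in> Ob C \<Longrightarrow> \<alpha> X \<in> Ar D" by (simp add: is_nat_def)
lemma nt_dm: "is_nat C D F G \<alpha> \<Longrightarrow> X \<in> Ob C \<Longrightarrow> Dm D (\<alpha> X) = omap F X" by (simp add: is_nat_def)
lemma nt_cd: "is_nat C D F G \<alpha> \<Longrightarrow> X \<in> Ob C \<Longrightarrow> Cd D (\<alpha> X) = omap G X" by (simp add: is_nat_def)
lemma nt_sq: "is_nat C D F G \<alpha> \<Longrightarrow> f \<in> Ar C \<Longrightarrow> Dm C f = X \<Longrightarrow> Cd C f = Y \<Longrightarrow>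
   Cmp D (\<alpha> Y) (amap F f) = Cmp D (amap G f) (\<alpha> X)" by (auto simp add: is_nat_def)
lemmas nt_simps = nt_in nt_dm nt_cd



locale S =
  fixes C :: "('a, 'b) cat" and D :: "('c, 'd) cat"
    and T :: "('a, 'b, 'a, 'b) ftor" and mu eta :: "'a \<Rightarrow> 'b"
    and T' :: "('c, 'd, 'c, 'd) ftor" and mu' eta' :: "'c \<Rightarrow> 'd"
    and G :: "('a, 'b, 'c, 'd) ftor" and V :: "('c, 'd, 'a, 'b) ftor"
    and h :: "'a \<Rightarrow> 'b" and e :: "'c \<Rightarrow> 'd"
    and z :: "'a \<Rightarrow> 'd"
  assumes cC: "category C" and cD: "category D"
    and mT: "is_monad C T mu eta" and mT': "is_monad D T' mu' eta'"
    and adj: "is_adjunction C D G V h e"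
    and zN: "is_nat C D (fcompose T' G) (fcompose G T) z"
    and zmu: "\<forall>X\<in>Ob C. Cmp D (z X) (mu' (omap G X))
                   = Cmp D (amap G (mu X)) (Cmp D (z (omap T X)) (amap T' (z X)))"
    and zeta: "\<forall>X\<in>Ob C. Cmp D (z X) (eta' (omap G X)) = amap G (eta X)"
begin

lemma fT: "is_functor C C T" using mT by (simp add: is_monad_def)
lemma fT': "is_functor D D T'" using mT' by (simp add: is_monad_def)
lemma fG: "is_functor C D G" using adj by (simp add: is_adjunction_def)
lemma fV: "is_functor D C V" using adj by (simp add: is_adjunction_def)
lemma muN: "is_nat C C (fcompose T T) T mu" using mT by (simp add: is_monad_def)
lemma etaN: "is_nat C C fid T eta" using mT by (simp add: is_monad_def)
lemma mu'N: "is_nat D D (fcompose T' T') T' mu'" using mT' by (simp add: is_monad_def)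
lemma eta'N: "is_nat D D fid T' eta'" using mT' by (simp add: is_monad_def)
lemma hN: "is_nat C C fid (fcompose V G) h" using adj by (simp add: is_adjunction_def)
lemma eN: "is_nat D D (fcompose G V) fid e" using adj by (simp add: is_adjunction_def)
lemma tri1: "X \<in> Ob C \<Longrightarrow> Cmp D (e (omap G X)) (amap G (h X)) = Idn D (omap G X)"
  using adj by (simp add: is_adjunction_def)
lemma tri2: "Y \<in> Ob D \<Longrightarrow> Cmp C (amap V (e Y)) (h (omap V Y)) = Idn C (omap V Y)"
  using adj by (simp add: is_adjunction_def)

lemmas ss = cat_simps[OF cC] cat_simps[OF cD] fo_simps[OF fT] fo_simps[OF fT'] fo_simps[OF fG] fo_simps[OF fV]
  nt_simps[OF muN] nt_simps[OF etaN] nt_simps[OF mu'N] nt_simps[OF eta'N] nt_simps[OF hN] nt_simps[OF eN] nt_simps[OF zN]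

lemmas muS = nt_sq[OF muN, simplified]
lemmas etaS = nt_sq[OF etaN, simplified]
lemmas mu'S = nt_sq[OF mu'N, simplified]
lemmas eta'S = nt_sq[OF eta'N, simplified]
lemmas hS = nt_sq[OF hN, simplified]
lemmas eS = nt_sq[OF eN, simplified]
lemmas zS = nt_sq[OF zN, simplified]

lemma transp_eq:
  assumes "A \<in> Ob C" "B \<in> Ob D" "f \<in> Ar C" "Dm C f = A" "Cd C f = omap V B"
  shows "f = Cmp C (amap V (Cmp D (e B) (amap G f))) (h A)"
proof -
  have "Cmp C (amap V (Cmp D (e B) (amap G f))) (h A) = Cmp C (amap V (e B)) (Cmp C (h (omap V B)) f)"
    using assms by (simp add: ss hS[of f A "omap V B", symmetric])
  also have "\<dots> = f" using assms by (simp add: ss cont[OF cC tri2])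
  finally show ?thesis by simp
qed

lemma transp_inj:
  assumes "A \<in> Ob C" "B \<in> Ob D" "f \<in> Ar C" "Dm C f = A" "Cd C f = omap V B"
     "g \<in> Ar C" "Dm C g = A" "Cd C g = omap V B"
     "Cmp D (e B) (amap G f) = Cmp D (e B) (amap G g)"
  shows "f = g"
  using transp_eq[OF assms(1-5)] transp_eq[OF assms(1,2,6-8)] assms(9) by simp

lemma TeGh: "X \<in> Ob C \<Longrightarrow> Cmp D (amap T' (e (omap G X))) (amap T' (amap G (h X))) = Idn D (omap T' (omap G X))"
  using fo_comp[OF fT', of "amap G (h X)" "e (omap G X)", symmetric] tri1[of X] by (simp add: ss)

lemma VeTh: "Y \<in> Ob D \<Longrightarrow> Cmp C (amap T (amap V (e Y))) (amap T (h (omap V Y))) = Idn C (omap T (omap V Y))"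
  using fo_comp[OF fT, of "h (omap V Y)" "amap V (e Y)", symmetric] tri2[of Y] by (simp add: ss)

lemma zinv:
  assumes X: "X \<in> Ob C" and i: "inverse_arr D (z X) t"
  shows "t \<in> Ar D" "Dm D t = omap G (omap T X)" "Cd D t = omap T' (omap G X)"
    "Cmp D t (z X) = Idn D (omap T' (omap G X))" "Cmp D (z X) t = Idn D (omap G (omap T X))"
  using i X by (simp_all add: inverse_arr_def ss)

lemma Vzinv:
  assumes X: "X \<in> Ob C" and i: "inverse_arr D (z X) t"
  shows "Cmp C (amap V t) (amap V (z X)) = Idn C (omap V (omap T' (omap G X)))"
  using fo_comp[OF fV, of "z X" t, symmetric] zinv[OF X i] X by (simp add: ss)

context
  fixes xi assumes xc: "xi_cond C D T mu eta T' mu' eta' G V h e z xi"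
begin
lemma xiN: "is_nat D C (fcompose T V) (fcompose V T') xi" using xc by (simp add: xi_cond_def)
lemma x4: "Y \<in> Ob D \<Longrightarrow> amap T' (e Y) = Cmp D (e (omap T' Y)) (Cmp D (amap G (xi Y)) (z (omap V Y)))"
  using xc by (simp add: xi_cond_def)
lemma x5: "X \<in> Ob C \<Longrightarrow> h (omap T X) = Cmp C (amap V (z X)) (Cmp C (xi (omap G X)) (amap T (h X)))"
  using xc by (simp add: xi_cond_def)
lemmas xiS = nt_sq[OF xiN, simplified]
lemmas xss = ss nt_simps[OF xiN]

lemma psi_r: assumes X: "X \<in> Ob C"
  shows "Cmp D (z X) (Cmp D (e (omap T' (omap G X))) (Cmp D (amap G (xi (omap G X))) (amap G (amap T (h X)))))
     = Idn D (omap G (omap T X))"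
proof -
  have "Idn D (omap G (omap T X)) = Cmp D (e (omap G (omap T X))) (amap G (h (omap T X)))"
    using tri1[of "omap T X"] X by (simp add: ss)
  also have "\<dots> = Cmp D (z X) (Cmp D (e (omap T' (omap G X))) (Cmp D (amap G (xi (omap G X))) (amap G (amap T (h X)))))"
    using X by (simp add: xss x5 cont[OF cD eS[of "z X" "omap T' (omap G X)" "omap G (omap T X)"]])
  finally show ?thesis by simp
qed

lemma psi_l: assumes X: "X \<in> Ob C"
  shows "Cmp D (Cmp D (e (omap T' (omap G X))) (Cmp D (amap G (xi (omap G X))) (amap G (amap T (h X))))) (z X)
     = Idn D (omap T' (omap G X))"
  using X by (simp add: xss zS[of "h X" X "omap V (omap G X)", symmetric]
     cont3[OF cD x4[of "omap G X", symmetric]] TeGh)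

lemma iso_from_xi: "X \<in> Ob C \<Longrightarrow> inverse_arr D (z X) (Cmp D (e (omap T' (omap G X))) (Cmp D (amap G (xi (omap G X))) (amap G (amap T (h X)))))"
  unfolding inverse_arr_def using psi_l psi_r by (simp add: xss)

lemma xi_unique: assumes Y: "Y \<in> Ob D"
  shows "xi Y = Cmp C (amap V (amap T' (e Y)))
            (Cmp C (amap V (inv_arr D (z (omap V Y)))) (h (omap T (omap V Y))))"
proof -
  define t where "t = inv_arr D (z (omap V Y))"
  have VY: "omap V Y \<in> Ob C" using Y by (simp add: ss)
  have i: "inverse_arr D (z (omap V Y)) t" unfolding t_def
    using inv_arr_eq[OF cD iso_from_xi[OF VY]] iso_from_xi[OF VY] by simp
  note zi = zinv[OF VY i]
  show ?thesis unfolding t_def[symmetric]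
    using Y by (simp add: xss zi x5 cont[OF cC Vzinv[OF VY i]]
      cont[OF cC xiS[of "e Y" "omap G (omap V Y)" Y, symmetric]] VeTh)
qed

end

definition th where "th X = inv_arr D (z X)"
definition xi0 where "xi0 Y = Cmp C (amap V (amap T' (e Y))) (Cmp C (amap V (th (omap V Y))) (h (omap T (omap V Y))))"

context
  assumes iso: "\<forall>X\<in>Ob C. iso_arr D (z X)"
begin

lemma thi: "X \<in> Ob C \<Longrightarrow> inverse_arr D (z X) (th X)"
  unfolding th_def by (simp add: iso inv_arr_prop)

lemma th_in: "X \<in> Ob C \<Longrightarrow> th X \<in> Ar D" using zinv[OF _ thi] by simp
lemma th_dm: "X \<in> Ob C \<Longrightarrow> Dm D (th X) = omap G (omap T X)" using zinv[OF _ thi] by simp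
lemma th_cd: "X \<in> Ob C \<Longrightarrow> Cd D (th X) = omap T' (omap G X)" using zinv[OF _ thi] by simp
lemma thz: "X \<in> Ob C \<Longrightarrow> Cmp D (th X) (z X) = Idn D (omap T' (omap G X))" using zinv[OF _ thi] by simp
lemma zth: "X \<in> Ob C \<Longrightarrow> Cmp D (z X) (th X) = Idn D (omap G (omap T X))" using zinv[OF _ thi] by simp

lemmas tss = ss th_in th_dm th_cd

lemma thnat: assumes f: "f \<in> Ar C" "Dm C f = X" "Cd C f = Y"
  shows "Cmp D (th Y) (amap G (amap T f)) = Cmp D (amap T' (amap G f)) (th X)"
proof -
  have X: "X \<in> Ob C" "Y \<in> Ob C" using f cat_dm[OF cC] cat_cd[OF cC] by auto
  have "Cmp D (th Y) (amap G (amap T f)) = Cmp D (th Y) (Cmp D (amap G (amap T f)) (Cmp D (z X) (th X)))"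
    using f X by (simp add: tss zth)
  also have "\<dots> = Cmp D (th Y) (Cmp D (z Y) (Cmp D (amap T' (amap G f)) (th X)))"
    using f X by (simp add: tss cont[OF cD zS[OF f, symmetric]])
  also have "\<dots> = Cmp D (amap T' (amap G f)) (th X)"
    using f X by (simp add: tss cont[OF cD thz])
  finally show ?thesis .
qed

lemma T'zth: "X \<in> Ob C \<Longrightarrow> Cmp D (amap T' (z X)) (amap T' (th X)) = Idn D (omap T' (omap G (omap T X)))"
  using fo_map[OF fT' zth] by (simp add: tss)

lemma thmu: assumes X: "X \<in> Ob C"
  shows "Cmp D (th X) (amap G (mu X)) = Cmp D (mu' (omap G X)) (Cmp D (amap T' (th X)) (th (omap T X)))"
proof -
  have "Cmp D (th X) (amap G (mu X)) = Cmp D (th X) (Cmp D (amap G (mu X)) (Cmp D (z (omap T X))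
       (Cmp D (amap T' (z X)) (Cmp D (amap T' (th X)) (th (omap T X))))))"
    using X by (simp add: tss cont[OF cD T'zth] zth)
  also have "\<dots> = Cmp D (th X) (Cmp D (z X) (Cmp D (mu' (omap G X)) (Cmp D (amap T' (th X)) (th (omap T X)))))"
    using X by (simp add: tss cont3[OF cD zmu[rule_format, OF X, symmetric]])
  also have "\<dots> = Cmp D (mu' (omap G X)) (Cmp D (amap T' (th X)) (th (omap T X)))"
    using X by (simp add: tss cont[OF cD thz])
  finally show ?thesis .
qed

lemma theta: assumes X: "X \<in> Ob C"
  shows "Cmp D (th X) (amap G (eta X)) = eta' (omap G X)"
proof -
  have "Cmp D (th X) (amap G (eta X)) = Cmp D (th X) (Cmp D (z X) (eta' (omap G X)))"
    using zeta X by simp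
  also have "\<dots> = eta' (omap G X)"
    using X by (simp add: tss cont[OF cD thz])
  finally show ?thesis .
qed


lemma xi0_in: "Y \<in> Ob D \<Longrightarrow> xi0 Y \<in> Ar C" unfolding xi0_def by (simp add: tss)
lemma xi0_dm: "Y \<in> Ob D \<Longrightarrow> Dm C (xi0 Y) = omap T (omap V Y)" unfolding xi0_def by (simp add: tss)
lemma xi0_cd: "Y \<in> Ob D \<Longrightarrow> Cd C (xi0 Y) = omap V (omap T' Y)" unfolding xi0_def by (simp add: tss)
lemmas xs = tss xi0_in xi0_dm xi0_cd

lemma KT: "Y \<in> Ob D \<Longrightarrow> Cmp D (e (omap T' Y)) (amap G (xi0 Y)) = Cmp D (amap T' (e Y)) (th (omap V Y))"
  unfolding xi0_def
  by (simp add: tss cont[OF cD eS[of "amap T' (e Y)" "omap T' (omap G (omap V Y))" "omap T' Y"]]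
       cont[OF cD eS[of "th (omap V Y)" "omap G (omap T (omap V Y))" "omap T' (omap G (omap V Y))"]] tri1)

lemma xi0_sq: assumes f: "f \<in> Ar D" "Dm D f = Y" "Cd D f = Y'"
  shows "Cmp C (xi0 Y') (amap T (amap V f)) = Cmp C (amap V (amap T' f)) (xi0 Y)"
proof -
  have Y: "Y \<in> Ob D" "Y' \<in> Ob D" using f cat_dm[OF cD] cat_cd[OF cD] by auto
  have "Cmp D (e (omap T' Y')) (amap G (Cmp C (xi0 Y') (amap T (amap V f))))
      = Cmp D (amap T' f) (Cmp D (amap T' (e Y)) (th (omap V Y)))"
    using f Y by (simp add: xs cont[OF cD KT] KT thnat[of "amap V f" "omap V Y" "omap V Y'"]
        cont[OF cD fo_map[OF fT' eS[OF f]]])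
  moreover have "Cmp D (e (omap T' Y')) (amap G (Cmp C (amap V (amap T' f)) (xi0 Y)))
      = Cmp D (amap T' f) (Cmp D (amap T' (e Y)) (th (omap V Y)))"
    using f Y by (simp add: xs cont[OF cD eS[of "amap T' f" "omap T' Y" "omap T' Y'"]] KT)
  ultimately show ?thesis
    by (intro transp_inj[of "omap T (omap V Y)" "omap T' Y'"]) (use f Y in \<open>simp_all add: xs\<close>)
qed

lemma xi0_mu: assumes Y: "Y \<in> Ob D"
  shows "Cmp C (xi0 Y) (mu (omap V Y)) = Cmp C (amap V (mu' Y)) (Cmp C (xi0 (omap T' Y)) (amap T (xi0 Y)))"
proof -
  have "Cmp D (e (omap T' Y)) (amap G (Cmp C (xi0 Y) (mu (omap V Y))))
      = Cmp D (amap T' (e Y)) (Cmp D (mu' (omap G (omap V Y))) (Cmp D (amap T' (th (omap V Y))) (th (omap T (omap V Y)))))"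
    using Y by (simp add: xs cont[OF cD KT] thmu)
  moreover have "Cmp D (e (omap T' Y)) (amap G (Cmp C (amap V (mu' Y)) (Cmp C (xi0 (omap T' Y)) (amap T (xi0 Y)))))
      = Cmp D (amap T' (e Y)) (Cmp D (mu' (omap G (omap V Y))) (Cmp D (amap T' (th (omap V Y))) (th (omap T (omap V Y)))))"
    using Y by (simp add: xs cont[OF cD eS[of "mu' Y" "omap T' (omap T' Y)" "omap T' Y"]]
       cont[OF cD KT] thnat[of "xi0 Y" "omap T (omap V Y)" "omap V (omap T' Y)"]
       cont[OF cD fo_map[OF fT' KT]] cont[OF cD mu'S[of "e Y" "omap G (omap V Y)" Y]])
  ultimately show ?thesis
    by (intro transp_inj[of "omap T (omap T (omap V Y))" "omap T' Y"]) (use Y in \<open>simp_all add: xs\<close>)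
qed

lemma xi0_eta: assumes Y: "Y \<in> Ob D"
  shows "Cmp C (xi0 Y) (eta (omap V Y)) = amap V (eta' Y)"
proof -
  have "Cmp D (e (omap T' Y)) (amap G (Cmp C (xi0 Y) (eta (omap V Y))))
      = Cmp D (amap T' (e Y)) (eta' (omap G (omap V Y)))"
    using Y by (simp add: xs cont[OF cD KT] theta)
  moreover have "Cmp D (e (omap T' Y)) (amap G (amap V (eta' Y)))
      = Cmp D (amap T' (e Y)) (eta' (omap G (omap V Y)))"
    using Y by (simp add: xs eS[of "eta' Y" Y "omap T' Y"] eta'S[of "e Y" "omap G (omap V Y)" Y])
  ultimately show ?thesis
    by (intro transp_inj[of "omap V Y" "omap T' Y"]) (use Y in \<open>simp_all add: xs\<close>)
qed

lemma xi0_4: "Y \<in> Ob D \<Longrightarrow> amap T' (e Y) = Cmp D (e (omap T' Y)) (Cmp D (amap G (xi0 Y)) (z (omap V Y)))"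
  by (simp add: xs cont[OF cD KT] thz)

lemma xi0_5: assumes X: "X \<in> Ob C"
  shows "h (omap T X) = Cmp C (amap V (z X)) (Cmp C (xi0 (omap G X)) (amap T (h X)))"
  unfolding xi0_def using X
  by (simp add: tss hS[of "amap T (h X)" "omap T X" "omap T (omap V (omap G X))"]
      cont[OF cC fo_map[OF fV thnat[of "h X" X "omap V (omap G X)"]]]
      cont[OF cC fo_map[OF fV TeGh]] cont[OF cC fo_map[OF fV zth]])

lemma xi0_cond: "xi_cond C D T mu eta T' mu' eta' G V h e z xi0"
  unfolding xi_cond_def
proof (intro conjI ballI)
  show "is_nat D C (fcompose T V) (fcompose V T') xi0"
    unfolding is_nat_def using fc_functor[OF cD cC cC fV fT] fc_functor[OF cD cD cC fT' fV]
    by (auto simp add: xs xi0_sq)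
qed (simp_all add: xi0_mu xi0_eta xi0_4 xi0_5)


end
end

theorem mainTheorem9:
  fixes C :: "('a, 'b) cat" and C' :: "('c, 'd) cat"
    and T :: "('a, 'b, 'a, 'b) ftor" and \<mu> \<eta> :: "'a \<Rightarrow> 'b"
    and T' :: "('c, 'd, 'c, 'd) ftor" and \<mu>' \<eta>' :: "'c \<Rightarrow> 'd"
    and G :: "('a, 'b, 'c, 'd) ftor" and V :: "('c, 'd, 'a, 'b) ftor"
    and h :: "'a \<Rightarrow> 'b" and e :: "'c \<Rightarrow> 'd"
    and \<zeta> :: "'a \<Rightarrow> 'd"
  assumes "category C" and "category C'"
    and "is_monad C T \<mu> \<eta>" and "is_monad C' T' \<mu>' \<eta>'"
    and "is_adjunction C C' G V h e"
    and "is_nat C C' (fcompose T' G) (fcompose G T) \<zeta>"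
    and "\<forall>X\<in>Ob C. Cmp C' (\<zeta> X) (\<mu>' (omap G X))
                   = Cmp C' (amap G (\<mu> X)) (Cmp C' (\<zeta> (omap T X)) (amap T' (\<zeta> X)))"
    and "\<forall>X\<in>Ob C. Cmp C' (\<zeta> X) (\<eta>' (omap G X)) = amap G (\<eta> X)"
  shows "((\<exists>\<xi>. xi_cond C C' T \<mu> \<eta> T' \<mu>' \<eta>' G V h e \<zeta> \<xi>) \<longleftrightarrow> (\<forall>X\<in>Ob C. iso_arr C' (\<zeta> X)))
       \<and> (\<forall>\<xi>. xi_cond C C' T \<mu> \<eta> T' \<mu>' \<eta>' G V h e \<zeta> \<xi> \<longrightarrow>
            (\<forall>Y\<in>Ob C'. \<xi> Y = Cmp C (amap V (amap T' (e Y)))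
                                (Cmp C (amap V (inv_arr C' (\<zeta> (omap V Y)))) (h (omap T (omap V Y))))))"
proof -
  interpret S C C' T \<mu> \<eta> T' \<mu>' \<eta>' G V h e \<zeta>
    using assms by (unfold_locales) auto
  show ?thesis
  proof (intro conjI allI impI ballI iffI)
    fix X assume "\<exists>\<xi>. xi_cond C C' T \<mu> \<eta> T' \<mu>' \<eta>' G V h e \<zeta> \<xi>" "X \<in> Ob C"
    then obtain \<xi> where "xi_cond C C' T \<mu> \<eta> T' \<mu>' \<eta>' G V h e \<zeta> \<xi>" by blast
    then show "iso_arr C' (\<zeta> X)" using iso_from_xi \<open>X \<in> Ob C\<close> unfolding iso_arr_def by blast
  next
    assume "\<forall>X\<in>Ob C. iso_arr C' (\<zeta> X)"
    then show "\<exists>\<xi>. xi_cond C C' T \<mu> \<eta> T' \<mu>' \<eta>' G V h e \<zeta> \<xi>" using xi0_cond by blast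
  next
    fix \<xi> Y assume "xi_cond C C' T \<mu> \<eta> T' \<mu>' \<eta>' G V h e \<zeta> \<xi>" "Y \<in> Ob C'"
    then show "\<xi> Y = Cmp C (amap V (amap T' (e Y)))
                                (Cmp C (amap V (inv_arr C' (\<zeta> (omap V Y)))) (h (omap T (omap V Y))))"
      by (rule xi_unique)
  qed
qed

end
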